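(* For $s\in\{1/2,1,3/2,\dots\}$, integers $0\le\sigma\le 2s$ and $-\sigma\le\mu\le\sigma$, \[ T^{(s)}_{\sigma\mu}=\sum_{k}A(s,\sigma,\mu,k)\,S_{(2s-\sigma,\;k-\mu,\;\sigma+\mu-2k,\;k)}, \] where the sum runs over integers $k$ with $\max(0,\mu)\le k\le(\sigma+\mu)/2$, and \[ A(s,\sigma,\mu,k)=\sqrt{\frac{(\sigma+\mu)!\,(\sigma-\mu)!}{(2\sigma)!}}\;\frac{l(s,\sigma)^{-1}(-1)^k\,2^{\mu-2k}\,\sigma!}{k!\,(k-\mu)!\,(\sigma+\mu-2k)!},\qquad l(s,\sigma)=\sqrt{\frac{(2s+\sigma+1)!\,(2s-\sigma)!}{(2\sigma+1)!}}\;\frac{\sigma!}{(2s)!}. \]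
   Context: $\mathcal{H}_s$ is the spin-$s$ space, identified with the fully symmetric subspace of $(\mathbb{C}^2)^{\otimes 2s}$ by identifying $|s,m\rangle$ with the normalized symmetric Dicke state having $s+m$ factors $|{\uparrow}\rangle=|1/2,1/2\rangle$ and $s-m$ factors $|{\downarrow}\rangle=|1/2,-1/2\rangle$; $\mathcal{P}_s$ is the orthogonal projection onto this subspace. The tensor operators are $T^{(s)}_{\sigma\mu}=\sum_{m,m'=-s}^{s}(-1)^{s-m'}C^{\sigma\mu}_{sm,\,s,-m'}|s,m\rangle\langle s,m'|$ with standard Clebsch–Gordan coefficients. Let $\sigma_0=\mathbb{1}_2$, $\sigma_z$ the Pauli matrix, and $\sigma_\pm=\sigma_x\pm i\sigma_y$. For a 4-tuple of non-negative integers $\vec\nu=(\nu_0,\nu_-,\nu_z,\nu_+)$ with sum $2s$, $S_{\vec\nu}$ is the operator on $\mathcal{H}_s$ given by $\mathcal{P}_s(\sigma_{\tau_1}\otimes\cdots\otimes\sigma_{\tau_{2s}})\mathcal{P}_s$ restricted to the symmetric subspace, where $\sigma_0,\sigma_-,\sigma_z,\sigma_+$ appear $\nu_0,\nu_-,\nu_z,\nu_+$ times respectively (the result is independent of the order). *)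

theory Defs
  imports Complex_Main
begin

text \<open>The spin s is encoded by n = 2s (a positive natural number).
  The basis vector |s,m> of H_s is indexed by j = s + m, 0 <= j <= n, so m = j - s.
  Operators on H_s are given by their matrix entries  op j j' = <s, j-s| op |s, j'-s>.\<close>

text \<open>Factorial of an integer argument (only used at non-negative arguments).\<close>
definition ifact :: "int \<Rightarrow> real" where
  "ifact x = fact (nat x)"

text \<open>Standard (Condon--Shortley) Clebsch--Gordan coefficient C^{J M}_{j1 m1, j2 m2},
  given by Racah's explicit formula. All arguments are DOUBLED:
  a = 2 j1, al = 2 m1, b = 2 j2, be = 2 m2, c = 2 J, ga = 2 M.\<close>
definition clebsch_gordan :: "int \<Rightarrow> int \<Rightarrow> int \<Rightarrow> int \<Rightarrow> int \<Rightarrow> int \<Rightarrow> real" where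
  "clebsch_gordan c ga a al b be =
    (if 0 \<le> a \<and> 0 \<le> b \<and> 0 \<le> c \<and> \<bar>al\<bar> \<le> a \<and> \<bar>be\<bar> \<le> b \<and> \<bar>ga\<bar> \<le> c
        \<and> even (a - al) \<and> even (b - be) \<and> even (c - ga) \<and> ga = al + be
        \<and> \<bar>a - b\<bar> \<le> c \<and> c \<le> a + b \<and> even (a + b + c)
     then sqrt (real_of_int (c + 1) * ifact ((c + a - b) div 2) * ifact ((c - a + b) div 2)
                 * ifact ((a + b - c) div 2) / ifact ((a + b + c) div 2 + 1))
        * sqrt (ifact ((c + ga) div 2) * ifact ((c - ga) div 2) * ifact ((a - al) div 2)
                 * ifact ((a + al) div 2) * ifact ((b - be) div 2) * ifact ((b + be) div 2))
        * (\<Sum>k\<in>{0..(a + b - c) div 2}.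
             (if 0 \<le> (a - al) div 2 - k \<and> 0 \<le> (b + be) div 2 - k
                 \<and> 0 \<le> (c - b + al) div 2 + k \<and> 0 \<le> (c - a - be) div 2 + k
              then (-1) ^ nat k / (ifact k * ifact ((a + b - c) div 2 - k)
                      * ifact ((a - al) div 2 - k) * ifact ((b + be) div 2 - k)
                      * ifact ((c - b + al) div 2 + k) * ifact ((c - a - be) div 2 + k))
              else 0))
     else 0)"

text \<open>Tensor operator T^{(s)}_{\<sigma>\<mu>} (n = 2s), matrix entry at (|s,m>, <s,m'|) with
  m = j - s, m' = j' - s:  (-1)^{s-m'} C^{\<sigma>\<mu>}_{s m, s, -m'}.  Note s - m' = n - j'.\<close>
definition tensor_op :: "nat \<Rightarrow> nat \<Rightarrow> int \<Rightarrow> nat \<Rightarrow> nat \<Rightarrow> complex" where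
  "tensor_op n \<sigma> \<mu> j j' =
     complex_of_real ((-1) ^ (n - j') *
       clebsch_gordan (2 * int \<sigma>) (2 * \<mu>) (int n) (2 * int j - int n) (int n) (int n - 2 * int j'))"

text \<open>Single-qubit operators sigma_0 = 1, sigma_- = sigma_x - i sigma_y, sigma_z,
  sigma_+ = sigma_x + i sigma_y. Basis of C^2: True = up, False = down;
  pauli_entry p x y = <x| sigma_p |y>.\<close>
datatype pauli = P0 | Pminus | Pz | Pplus

fun pauli_entry :: "pauli \<Rightarrow> bool \<Rightarrow> bool \<Rightarrow> complex" where
  "pauli_entry P0 x y = (if x = y then 1 else 0)"
| "pauli_entry Pz x y = (if x = y then (if x then 1 else -1) else 0)"
| "pauli_entry Pplus x y = (if x \<and> \<not> y then 2 else 0)"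
| "pauli_entry Pminus x y = (if \<not> x \<and> y then 2 else 0)"

definition qubit_basis :: "nat \<Rightarrow> bool list set" where
  "qubit_basis n = {bs. length bs = n}"

definition tensor_entry :: "pauli list \<Rightarrow> bool list \<Rightarrow> bool list \<Rightarrow> complex" where
  "tensor_entry ts bs cs = (\<Prod>i<length ts. pauli_entry (ts ! i) (bs ! i) (cs ! i))"

text \<open>Normalized symmetric Dicke state with j up-factors (j = s + m), as coordinates
  in the computational basis.\<close>
definition dicke :: "nat \<Rightarrow> nat \<Rightarrow> bool list \<Rightarrow> complex" where
  "dicke n j bs = (if length bs = n \<and> length (filter id bs) = j
                   then complex_of_real (1 / sqrt (real (n choose j))) else 0)"

text \<open>Word with nu0 copies of sigma_0, nu- of sigma_-, nuz of sigma_z, nu+ of sigma_+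
  (a fixed order; the operator S_nu does not depend on it).\<close>
definition pauli_word :: "nat \<Rightarrow> nat \<Rightarrow> nat \<Rightarrow> nat \<Rightarrow> pauli list" where
  "pauli_word a b c d = replicate a P0 @ replicate b Pminus @ replicate c Pz @ replicate d Pplus"

text \<open>S_nu = P_s (sigma_{t_1} \<otimes> ... \<otimes> sigma_{t_2s}) P_s restricted to H_s, as the matrix
  in the basis |s,m>:  entry (j,j') = <D_j| sigma_... |D_j'>, with 2s = nu0+nu-+nuz+nu+.\<close>
definition S_op :: "nat \<times> nat \<times> nat \<times> nat \<Rightarrow> nat \<Rightarrow> nat \<Rightarrow> complex" where
  "S_op nu j j' = (case nu of (a, b, c, d) \<Rightarrow>
     (let n = a + b + c + d; ts = pauli_word a b c d in
       \<Sum>bs\<in>qubit_basis n. \<Sum>cs\<in>qubit_basis n.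
         cnj (dicke n j bs) * tensor_entry ts bs cs * dicke n j' cs))"

definition l_coef :: "nat \<Rightarrow> nat \<Rightarrow> real" where
  "l_coef n \<sigma> = sqrt (fact (n + \<sigma> + 1) * fact (n - \<sigma>) / fact (2 * \<sigma> + 1)) * fact \<sigma> / fact n"

definition A_coef :: "nat \<Rightarrow> nat \<Rightarrow> int \<Rightarrow> int \<Rightarrow> real" where
  "A_coef n \<sigma> \<mu> k =
     sqrt (ifact (int \<sigma> + \<mu>) * ifact (int \<sigma> - \<mu>) / fact (2 * \<sigma>))
     * (inverse (l_coef n \<sigma>) * (-1) ^ nat \<bar>k\<bar> * 2 powr real_of_int (\<mu> - 2 * k) * fact \<sigma>
        / (ifact k * ifact (k - \<mu>) * ifact (int \<sigma> + \<mu> - 2 * k)))"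

end

theory Submission
  imports Defs
begin


definition cnt :: "bool list \<Rightarrow> int" where "cnt bs = int (length (filter id bs))"

definition FF :: "pauli list \<Rightarrow> int \<Rightarrow> int \<Rightarrow> complex" where
 "FF ts j j' = (\<Sum>bs\<in>qubit_basis (length ts). \<Sum>cs\<in>qubit_basis (length ts).
     if cnt bs = j \<and> cnt cs = j' then tensor_entry ts bs cs else 0)"

lemma finite_qb[simp]: "finite (qubit_basis m)"
proof -
  have "qubit_basis m = {xs. set xs \<subseteq> (UNIV::bool set) \<and> length xs = m}"
    by (auto simp: qubit_basis_def)
  then show ?thesis using finite_lists_length_eq[of "UNIV::bool set" m] by simp
qed

lemma qb_Suc: "qubit_basis (Suc m) = Cons True ` qubit_basis m \<union> Cons False ` qubit_basis m"
proof (rule set_eqI)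
  fix xs show "xs \<in> qubit_basis (Suc m) \<longleftrightarrow> xs \<in> Cons True ` qubit_basis m \<union> Cons False ` qubit_basis m"
    by (cases xs) (auto simp: qubit_basis_def)
qed

lemma sum_qb_Suc:
  "(\<Sum>bs\<in>qubit_basis (Suc m). g bs) = (\<Sum>bs\<in>qubit_basis m. g (True # bs)) + (\<Sum>bs\<in>qubit_basis m. g (False # bs))"
proof -
  have "(\<Sum>bs\<in>qubit_basis (Suc m). g bs) = (\<Sum>bs\<in>Cons True ` qubit_basis m. g bs) + (\<Sum>bs\<in>Cons False ` qubit_basis m. g bs)"
    unfolding qb_Suc by (rule sum.union_disjoint) auto
  also have "\<dots> = (\<Sum>bs\<in>qubit_basis m. g (True # bs)) + (\<Sum>bs\<in>qubit_basis m. g (False # bs))"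
    by (simp add: sum.reindex)
  finally show ?thesis .
qed

lemma tensor_entry_Cons:
  "tensor_entry (t # ts) (x # bs) (y # cs) = pauli_entry t x y * tensor_entry ts bs cs"
  unfolding tensor_entry_def length_Cons prod.lessThan_Suc_shift by simp

lemma cnt_Cons: "cnt (x # bs) = (if x then 1 else 0) + cnt bs"
  by (simp add: cnt_def)

lemma FF_Cons: "FF (t # ts) j j' =
   pauli_entry t True True * FF ts (j-1) (j'-1) + pauli_entry t True False * FF ts (j-1) j'
 + pauli_entry t False True * FF ts j (j'-1) + pauli_entry t False False * FF ts j j'"
  unfolding FF_def
  by (simp add: sum_qb_Suc tensor_entry_Cons cnt_Cons sum.distrib sum_distrib_left
       if_distrib[of "\<lambda>z. _ * z"] algebra_simps cong: if_cong)

lemma FF_Nil: "FF [] j j' = (if j = 0 \<and> j' = 0 then 1 else 0)"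
proof -
  have q0: "qubit_basis (length []) = {[]}" by (auto simp: qubit_basis_def)
  show ?thesis unfolding FF_def q0 by (simp add: cnt_def tensor_entry_def)
qed



lemma pascal_sum:
  fixes e :: "'a::comm_ring_1"
  shows "(\<Sum>q\<le>Suc c. of_nat (Suc c choose q) * e ^ (Suc c - q) * G q)
       = (\<Sum>q\<le>c. of_nat (c choose q) * e ^ (c - q) * G (Suc q)) + e * (\<Sum>q\<le>c. of_nat (c choose q) * e ^ (c - q) * G q)"
proof -
  have A: "(\<Sum>q\<le>Suc c. of_nat (Suc c choose q) * e ^ (Suc c - q) * G q)
     = e ^ Suc c * G 0 + (\<Sum>q\<le>c. of_nat (c choose q) * e ^ (c - q) * G (Suc q))
        + (\<Sum>q\<le>c. of_nat (c choose Suc q) * e ^ (c - q) * G (Suc q))"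
    by (simp add: sum.atMost_Suc_shift algebra_simps sum.distrib del: sum.atMost_Suc)
  have B: "e * (\<Sum>q\<le>c. of_nat (c choose q) * e ^ (c - q) * G q)
       = (\<Sum>q\<le>Suc c. of_nat (c choose q) * e ^ (Suc c - q) * G q)"
    by (simp add: sum_distrib_left Suc_diff_le algebra_simps binomial_eq_0)
  have C: "(\<Sum>q\<le>Suc c. of_nat (c choose q) * e ^ (Suc c - q) * G q)
      = e ^ Suc c * G 0 + (\<Sum>q\<le>c. of_nat (c choose Suc q) * e ^ (c - q) * G (Suc q))"
    by (simp add: sum.atMost_Suc_shift del: sum.atMost_Suc)
  show ?thesis using A B C by (simp add: algebra_simps)
qed

lemma FF_Pplus: "FF (replicate d Pplus) j j' = (if j = int d \<and> j' = 0 then 2 ^ d else 0)"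
proof (induction d arbitrary: j)
  case 0 then show ?case by (simp add: FF_Nil)
next
  case (Suc d) then show ?case by (auto simp: FF_Cons)
qed

lemma FF_Pminus: "FF (replicate b Pminus @ ts) j j' = 2 ^ b * FF ts j (j' - int b)"
proof (induction b arbitrary: j')
  case 0 then show ?case by simp
next
  case (Suc b) then show ?case by (simp add: FF_Cons algebra_simps)
qed

lemma FF_diag:
  assumes t1: "pauli_entry t True True = 1" and t2: "pauli_entry t False False = e"
    and t3: "pauli_entry t True False = 0" and t4: "pauli_entry t False True = 0"
  shows "FF (replicate c t @ ts) j j' = (\<Sum>q\<le>c. of_nat (c choose q) * e ^ (c - q) * FF ts (j - int q) (j' - int q))"
proof (induction c arbitrary: j j')
  case 0 then show ?case by simp
next
  case (Suc c)
  have "FF (replicate (Suc c) t @ ts) j j' = FF (replicate c t @ ts) (j-1) (j'-1) + e * FF (replicate c t @ ts) j j'"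
    by (simp add: FF_Cons t1 t2 t3 t4)
  also have "\<dots> = (\<Sum>q\<le>c. of_nat (c choose q) * e ^ (c - q) * FF ts (j - int (Suc q)) (j' - int (Suc q)))
     + e * (\<Sum>q\<le>c. of_nat (c choose q) * e ^ (c - q) * FF ts (j - int q) (j' - int q))"
    unfolding Suc.IH by (simp add: algebra_simps)
  also have "\<dots> = (\<Sum>q\<le>Suc c. of_nat (Suc c choose q) * e ^ (Suc c - q) * FF ts (j - int q) (j' - int q))"
    by (rule pascal_sum[symmetric, where G = "\<lambda>q. FF ts (j - int q) (j' - int q)"])
  finally show ?case .
qed



definition rf :: "int \<Rightarrow> real" where "rf x = (if x < 0 then 0 else 1 / fact (nat x))"
definition sg :: "int \<Rightarrow> real" where "sg x = (if even x then 1 else -1)"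

lemma rf_neg[simp]: "x < 0 \<Longrightarrow> rf x = 0" by (simp add: rf_def)
lemma rf_ifact: "0 \<le> x \<Longrightarrow> rf x = 1 / ifact x" by (simp add: rf_def ifact_def)
lemma rf_nonneg: "rf x \<ge> 0" by (simp add: rf_def)
lemma rf_of_nat[simp]: "rf (int m) = 1 / fact m" by (simp add: rf_def)

lemma sg_add: "sg (x + y) = sg x * sg y" by (auto simp: sg_def)
lemma sg_diff: "sg (x - y) = sg x * sg y" by (auto simp: sg_def)
lemma sg_sq: "sg x * sg x = 1" by (auto simp: sg_def)

lemma rf_choose:
  assumes "0 \<le> k" shows "rf k * rf (int m - k) = real (m choose nat k) / fact m"
proof (cases "k \<le> int m")
  case True
  then obtain i where i: "k = int i" "i \<le> m" using assms by (metis nonneg_int_cases of_nat_le_iff)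
  have "real (m choose i) = fact m / (fact i * fact (m - i))"
    using binomial_fact[OF i(2)] by simp
  have e: "rf (int m - k) = 1 / fact (m - i)"
  proof -
    have "rf (int m - k) = rf (int (m - i))" using i by (simp add: of_nat_diff)
    then show ?thesis by (simp only: rf_of_nat)
  qed
  have "rf k * rf (int m - k) = 1 / (fact i * fact (m - i))" using i(1) e by simp
  also have "\<dots> = (fact m / (fact i * fact (m - i))) / fact m" by simp
  also have "\<dots> = real (m choose nat k) / fact m" using i \<open>real (m choose i) = _\<close> by simp
  finally show ?thesis .
next
  case False then show ?thesis by (simp add: binomial_eq_0 nat_less_iff)
qed

lemma vandermonde_rf:
  fixes A B :: nat and N :: int and S :: "int set"
  assumes "finite S" "{0..N} \<subseteq> S"
  shows "(\<Sum>k\<in>S. rf k * rf (int A - k) * rf (N - k) * rf (int B - N + k))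
       = fact (A + B) / (fact A * fact B) * rf N * rf (int (A + B) - N)"
proof (cases "N < 0")
  case True
  have "rf k * rf (int A - k) * rf (N - k) * rf (int B - N + k) = 0" for k
    using True by (cases "k < 0") auto
  then have "\<forall>k\<in>S. rf k * rf (int A - k) * rf (N - k) * rf (int B - N + k) = 0" by blast
  then show ?thesis using True by (simp only: sum.neutral) simp
next
  case False
  then obtain m where m: "N = int m" by (metis nonneg_int_cases not_less)
  have "(\<Sum>k\<in>S. rf k * rf (int A - k) * rf (N - k) * rf (int B - N + k))
      = (\<Sum>k\<in>{0..N}. rf k * rf (int A - k) * rf (N - k) * rf (int B - N + k))"
  proof (rule sum.mono_neutral_right[OF assms(1) assms(2)])
    show "\<forall>i\<in>S - {0..N}. rf i * rf (int A - i) * rf (N - i) * rf (int B - N + i) = 0"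
      by auto
  qed
  also have "\<dots> = (\<Sum>i\<le>m. rf (int i) * rf (int A - int i) * rf (int m - int i) * rf (int B - int m + int i))"
  proof -
    have "{0..N} = int ` {..m}" using m by (auto simp: image_iff intro!: bexI[of _ "nat _"])
    then show ?thesis using m by (simp add: sum.reindex)
  qed
  also have "\<dots> = (\<Sum>i\<le>m. (real (A choose i) / fact A) * (real (B choose (m - i)) / fact B))"
  proof (rule sum.cong[OF refl])
    fix i assume "i \<in> {..m}"
    then have im: "i \<le> m" by simp
    have 1: "rf (int i) * rf (int A - int i) = real (A choose i) / fact A"
      using rf_choose[of "int i" A] by simp
    have 2: "rf (int m - int i) * rf (int B - (int m - int i)) = real (B choose (m - i)) / fact B"
      using rf_choose[of "int m - int i" B] im by (simp add: nat_diff_distrib of_nat_diff)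
    have "rf (int i) * rf (int A - int i) * rf (int m - int i) * rf (int B - int m + int i)
        = (rf (int i) * rf (int A - int i)) * (rf (int m - int i) * rf (int B - (int m - int i)))"
      by (simp add: algebra_simps)
    then show "rf (int i) * rf (int A - int i) * rf (int m - int i) * rf (int B - int m + int i)
        = (real (A choose i) / fact A) * (real (B choose (m - i)) / fact B)" unfolding 1 2 .
  qed
  also have "\<dots> = real (\<Sum>i\<le>m. (A choose i) * (B choose (m - i))) / (fact A * fact B)"
    by (simp add: sum_divide_distrib)
  also have "\<dots> = real ((A + B) choose m) / (fact A * fact B)"
    by (simp only: vandermonde)
  also have "\<dots> = fact (A + B) / (fact A * fact B) * rf N * rf (int (A + B) - N)"
    using rf_choose[of "int m" "A + B"] m by (simp add: field_simps)
  finally show ?thesis .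
qed

lemma sum_shift_R:
  fixes f :: "int \<Rightarrow> real"
  assumes "\<And>x. x \<notin> {a..b} \<Longrightarrow> f x = 0" "{a+s..b+s} \<subseteq> R" "finite R"
  shows "(\<Sum>x\<in>{a..b}. f x) = (\<Sum>r\<in>R. f (r - s))"
proof -
  have img: "(\<lambda>x. x + s) ` {a..b} = {a+s..b+s}"
    by (auto simp: image_iff intro!: bexI[of _ "_ - s"])
  have "(\<Sum>x\<in>{a..b}. f x) = (\<Sum>r\<in>{a+s..b+s}. f (r - s))"
    by (subst img[symmetric], subst sum.reindex) (auto simp: inj_on_def)
  also have "\<dots> = (\<Sum>r\<in>R. f (r - s))"
    by (rule sum.mono_neutral_left[OF assms(3) assms(2)]) (use assms(1) in auto)
  finally show ?thesis .
qed



lemma FF_word1: "FF (pauli_word a b c d) j j' =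
   (\<Sum>p\<le>a. \<Sum>q\<le>c. complex_of_real (real (a choose p) * 2 ^ b * real (c choose q) * (-1) ^ (c - q) *
      (if j - int p - int q = int d \<and> j' - int p - int b - int q = 0 then 2 ^ d else 0)))"
proof -
  have e0: "FF (replicate a P0 @ ts) j j' = (\<Sum>p\<le>a. of_nat (a choose p) * 1 ^ (a - p) * FF ts (j - int p) (j' - int p))" for ts j j'
    by (rule FF_diag) simp_all
  have ez: "FF (replicate c Pz @ ts) j j' = (\<Sum>q\<le>c. of_nat (c choose q) * (-1) ^ (c - q) * FF ts (j - int q) (j' - int q))" for ts j j'
    by (rule FF_diag) simp_all
  have "FF (pauli_word a b c d) j j' = (\<Sum>p\<le>a. of_nat (a choose p) * (2 ^ b * (\<Sum>q\<le>c. of_nat (c choose q) * (-1) ^ (c - q) *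
      (if j - int p - int q = int d \<and> j' - int p - int b - int q = 0 then 2 ^ d else 0))))"
    unfolding pauli_word_def append_assoc e0 FF_Pminus ez FF_Pplus
    by (simp add: algebra_simps)
  then show ?thesis by (auto simp: sum_distrib_left algebra_simps intro!: sum.cong)
qed

definition Fr :: "nat \<Rightarrow> nat \<Rightarrow> nat \<Rightarrow> nat \<Rightarrow> int \<Rightarrow> int \<Rightarrow> real" where
  "Fr a b c d j j' = (if j - int d = j' - int b then 2 ^ (b + d) *
     (\<Sum>q\<le>c. fact c * rf (int q) * rf (int c - int q) * sg (int c - int q) * fact a
        * rf (j - int d - int q) * rf (int a - j + int d + int q)) else 0)"

lemma sg_nat: "sg (int m) = (-1) ^ m" by (simp add: sg_def)

lemma delta_choose: "(\<Sum>p\<le>a. real (a choose p) * (if int p = X then 1 else 0)) = fact a * rf X * rf (int a - X)"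
proof (cases "0 \<le> X \<and> X \<le> int a")
  case True
  then obtain i where i: "X = int i" "i \<le> a" by (metis nonneg_int_cases of_nat_le_iff)
  have "(\<Sum>p\<le>a. real (a choose p) * (if int p = X then 1 else 0)) = (\<Sum>p\<le>a. if p = i then real (a choose p) else 0)"
    using i by (intro sum.cong) auto
  also have "\<dots> = real (a choose i)" using i by simp
  also have "\<dots> = fact a * rf X * rf (int a - X)"
  proof -
    have h: "rf X * rf (int a - X) = real (a choose i) / fact a" using rf_choose[of X a] i by simp
    show ?thesis unfolding mult.assoc h by simp
  qed
  finally show ?thesis .
next
  case False
  have "(\<Sum>p\<le>a. real (a choose p) * (if int p = X then 1 else 0)) = 0"
    using False by (intro sum.neutral) auto
  moreover have "rf X * rf (int a - X) = 0" using False by auto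
  ultimately show ?thesis by simp
qed

lemma choose_sg: "q \<le> c \<Longrightarrow> real (c choose q) * (-1) ^ (c - q) = fact c * rf (int q) * rf (int c - int q) * sg (int c - int q)"
proof -
  assume qc: "q \<le> c"
  have 1: "rf (int q) * rf (int c - int q) = real (c choose q) / fact c" using rf_choose[of "int q" c] by simp
  have 2: "sg (int c - int q) = (-1) ^ (c - q)" using qc sg_nat[of "c - q"] by (simp add: of_nat_diff)
  have "fact c * rf (int q) * rf (int c - int q) * sg (int c - int q) = fact c * (rf (int q) * rf (int c - int q)) * sg (int c - int q)"
    by simp
  also have "\<dots> = real (c choose q) * (-1) ^ (c - q)" unfolding 1 2 by simp
  finally show ?thesis by simp
qed

lemma FF_word: "FF (pauli_word a b c d) j j' = complex_of_real (Fr a b c d j j')"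
proof -
  let ?g = "\<lambda>p q. real (a choose p) * 2 ^ b * real (c choose q) * (-1) ^ (c - q) *
      (if j - int p - int q = int d \<and> j' - int p - int b - int q = 0 then 2 ^ d else 0)"
  have "(\<Sum>p\<le>a. \<Sum>q\<le>c. ?g p q) = Fr a b c d j j'"
  proof (cases "j - int d = j' - int b")
    case True
    have "(\<Sum>p\<le>a. \<Sum>q\<le>c. ?g p q) = (\<Sum>q\<le>c. \<Sum>p\<le>a. ?g p q)" by (rule sum.swap)
    also have "\<dots> = (\<Sum>q\<le>c. 2 ^ (b + d) * (real (c choose q) * (-1) ^ (c - q)) *
          (\<Sum>p\<le>a. real (a choose p) * (if int p = j - int d - int q then 1 else 0)))"
    proof (intro sum.cong refl)
      fix q assume "q \<in> {..c}"
      have eq: "?g p q = 2 ^ (b + d) * (real (c choose q) * (-1) ^ (c - q)) * (real (a choose p) * (if int p = j - int d - int q then 1 else 0))" for p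
        using True by (auto simp: power_add)
      show "(\<Sum>p\<le>a. ?g p q) = 2 ^ (b + d) * (real (c choose q) * (-1) ^ (c - q)) *
          (\<Sum>p\<le>a. real (a choose p) * (if int p = j - int d - int q then 1 else 0))"
        by (simp only: eq sum_distrib_left)
    qed
    also have "\<dots> = Fr a b c d j j'"
      unfolding Fr_def delta_choose using True
      by (simp add: sum_distrib_left choose_sg algebra_simps)
    finally show ?thesis .
  next
    case False
    then have z: "?g p q = 0" for p q by auto
    have "(\<Sum>p\<le>a. \<Sum>q\<le>c. ?g p q) = 0" by (simp only: z sum.neutral_const)
    then show ?thesis using False by (simp add: Fr_def)
  qed
  then show ?thesis unfolding FF_word1 by (subst (asm) eq_commute) (simp only: of_real_sum)
qed



lemma length_pauli_word: "length (pauli_word a b c d) = a + b + c + d"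
  by (simp add: pauli_word_def)

lemma S_op_eq: "S_op (a, b, c, d) j j' = complex_of_real (1 / sqrt (real ((a+b+c+d) choose j)) * (1 / sqrt (real ((a+b+c+d) choose j')))
    * Fr a b c d (int j) (int j'))"
proof -
  let ?N = "a+b+c+d"
  let ?ts = "pauli_word a b c d"
  let ?x = "complex_of_real (1 / sqrt (real (?N choose j)))"
  let ?y = "complex_of_real (1 / sqrt (real (?N choose j')))"
  have "S_op (a, b, c, d) j j' = (\<Sum>bs\<in>qubit_basis ?N. \<Sum>cs\<in>qubit_basis ?N.
         cnj (dicke ?N j bs) * tensor_entry ?ts bs cs * dicke ?N j' cs)"
    by (simp add: S_op_def Let_def)
  also have "\<dots> = (\<Sum>bs\<in>qubit_basis ?N. \<Sum>cs\<in>qubit_basis ?N. ?x * ?y *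
        (if cnt bs = int j \<and> cnt cs = int j' then tensor_entry ?ts bs cs else 0))"
    by (intro sum.cong refl) (auto simp: dicke_def qubit_basis_def cnt_def)
  also have "\<dots> = ?x * ?y * FF ?ts (int j) (int j')"
    unfolding FF_def length_pauli_word by (simp add: sum_distrib_left)
  also have "\<dots> = complex_of_real (1 / sqrt (real ((a+b+c+d) choose j)) * (1 / sqrt (real ((a+b+c+d) choose j')))
    * Fr a b c d (int j) (int j'))"
    unfolding FF_word by simp
  finally show ?thesis .
qed



lemma sg_nat_pow: "0 \<le> t \<Longrightarrow> (-1::real) ^ nat t = sg t"
  by (simp add: sg_def even_nat_iff)

lemma CG_eval:
  fixes n s j j' :: nat and mu :: int
  assumes jn: "j \<le> n" and jn': "j' \<le> n" and sn: "s \<le> n" and ms: "\<bar>mu\<bar> \<le> int s" and jj: "int j = int j' + mu"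
  shows "clebsch_gordan (2 * int s) (2 * mu) (int n) (2 * int j - int n) (int n) (int n - 2 * int j') =
    sqrt (real_of_int (2 * int s + 1) * ifact (int s) * ifact (int s) * ifact (int n - int s) / ifact (int n + int s + 1))
  * sqrt (ifact (int s + mu) * ifact (int s - mu) * ifact (int n - int j) * ifact (int j) * ifact (int j') * ifact (int n - int j'))
  * (\<Sum>t\<in>{0..int n - int s}. sg t * rf t * rf (int n - int s - t) * rf (int n - int j - t) * rf (int n - int j' - t)
       * rf (int s - int n + int j + t) * rf (int s - int n + int j' + t))"
proof -
  have cond: "0 \<le> int n \<and> 0 \<le> int n \<and> 0 \<le> 2 * int s \<and> \<bar>2 * int j - int n\<bar> \<le> int n \<and> \<bar>int n - 2 * int j'\<bar> \<le> int n \<and> \<bar>2 * mu\<bar> \<le> 2 * int s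
        \<and> even (int n - (2 * int j - int n)) \<and> even (int n - (int n - 2 * int j')) \<and> even (2 * int s - 2 * mu) \<and> 2 * mu = (2 * int j - int n) + (int n - 2 * int j')
        \<and> \<bar>int n - int n\<bar> \<le> 2 * int s \<and> 2 * int s \<le> int n + int n \<and> even (int n + int n + 2 * int s)"
    using assms by auto
  have d1: "(2 * int s + int n - int n) div 2 = int s" by simp
  have d2: "(2 * int s - int n + int n) div 2 = int s" by simp
  have d3: "(int n + int n - 2 * int s) div 2 = int n - int s" by simp
  have d4: "(int n + int n + 2 * int s) div 2 = int n + int s" by simp
  have d5: "(2 * int s + 2 * mu) div 2 = int s + mu" by simp
  have d6: "(2 * int s - 2 * mu) div 2 = int s - mu" by simp
  have d7: "(int n - (2 * int j - int n)) div 2 = int n - int j" by simp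
  have d8: "(int n + (2 * int j - int n)) div 2 = int j" by simp
  have d9: "(int n - (int n - 2 * int j')) div 2 = int j'" by simp
  have d10: "(int n + (int n - 2 * int j')) div 2 = int n - int j'" by simp
  have d11: "(2 * int s - int n + (2 * int j - int n)) div 2 = int s - int n + int j" by simp
  have d12: "(2 * int s - int n - (int n - 2 * int j')) div 2 = int s - int n + int j'" by simp
  have sumeq: "(\<Sum>k\<in>{0..int n - int s}.
             (if 0 \<le> int n - int j - k \<and> 0 \<le> int n - int j' - k
                 \<and> 0 \<le> int s - int n + int j + k \<and> 0 \<le> int s - int n + int j' + k
              then (-1) ^ nat k / (ifact k * ifact (int n - int s - k)
                      * ifact (int n - int j - k) * ifact (int n - int j' - k)
                      * ifact (int s - int n + int j + k) * ifact (int s - int n + int j' + k))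
              else 0))
     = (\<Sum>t\<in>{0..int n - int s}. sg t * rf t * rf (int n - int s - t) * rf (int n - int j - t) * rf (int n - int j' - t)
       * rf (int s - int n + int j + t) * rf (int s - int n + int j' + t))"
  proof (intro sum.cong refl)
    fix t assume t: "t \<in> {0..int n - int s}"
    show "(if 0 \<le> int n - int j - t \<and> 0 \<le> int n - int j' - t
                 \<and> 0 \<le> int s - int n + int j + t \<and> 0 \<le> int s - int n + int j' + t
              then (-1) ^ nat t / (ifact t * ifact (int n - int s - t)
                      * ifact (int n - int j - t) * ifact (int n - int j' - t)
                      * ifact (int s - int n + int j + t) * ifact (int s - int n + int j' + t))
              else 0) = sg t * rf t * rf (int n - int s - t) * rf (int n - int j - t) * rf (int n - int j' - t)
       * rf (int s - int n + int j + t) * rf (int s - int n + int j' + t)"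
    proof (cases "0 \<le> int n - int j - t \<and> 0 \<le> int n - int j' - t
                 \<and> 0 \<le> int s - int n + int j + t \<and> 0 \<le> int s - int n + int j' + t")
      case True
      then show ?thesis using t by (simp add: rf_ifact sg_nat_pow)
    next
      case False
      then show ?thesis by auto
    qed
  qed
  show ?thesis
    unfolding clebsch_gordan_def
    apply (subst if_P[OF cond])
    apply (simp only: d1 d2 d3 d4 d5 d6 d7 d8 d9 d10 d11 d12)
    apply (simp only: sumeq)
    done
qed



lemma alg:
  fixes X s2 fs fn fns fnps1 f2s f2s1 fj fnj fj' fnj' cj cj' :: real
  assumes pos: "fs > 0" "fn > 0" "fns > 0" "fnps1 > 0" "f2s > 0" "fj > 0" "fnj > 0" "fj' > 0" "fnj' > 0" "X \<ge> 0" "s2 > 0"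
    and f2: "f2s1 = s2 * f2s" and c1: "cj = fn / (fj * fnj)" and c2: "cj' = fn / (fj' * fnj')"
  shows "sqrt (s2 * fs * fs * fns / fnps1) * sqrt (X * fnj * fj * fj' * fnj')
       = sqrt (X / f2s) * inverse (sqrt (fnps1 * fns / f2s1) * fs / fn) * fs * (1 / sqrt cj * (1 / sqrt cj')) * fns * fs"
proof -
  have cpos: "cj > 0" "cj' > 0" using pos c1 c2 by auto
  have f2pos: "f2s1 > 0" using f2 pos by simp
  let ?L = "sqrt (s2 * fs * fs * fns / fnps1) * sqrt (X * fnj * fj * fj' * fnj')"
  let ?R = "sqrt (X / f2s) * inverse (sqrt (fnps1 * fns / f2s1) * fs / fn) * fs * (1 / sqrt cj * (1 / sqrt cj')) * fns * fs"
  have L0: "?L \<ge> 0" using pos by simp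
  have R0: "?R \<ge> 0" using pos cpos f2pos by simp
  have L2: "?L ^ 2 = (s2 * fs * fs * fns / fnps1) * (X * fnj * fj * fj' * fnj')"
    using pos by (simp add: power_mult_distrib)
  have R2: "?R ^ 2 = (X / f2s) * inverse ((fnps1 * fns / f2s1) * fs ^ 2 / fn ^ 2) * fs ^ 2 * (1 / cj * (1 / cj')) * fns ^ 2 * fs ^ 2"
    using pos cpos f2pos by (simp add: power_mult_distrib power_divide power_inverse; simp add: ac_simps)
  have "?L ^ 2 = ?R ^ 2"
    unfolding L2 R2 f2 c1 c2 using pos by (simp add: field_simps power2_eq_square)
  then show ?thesis using L0 R0 by (simp add: power2_eq_iff_nonneg)
qed



lemma inner_k:
  fixes s :: nat and mu r :: int and R :: "int set"
  assumes ms: "\<bar>mu\<bar> \<le> int s" and fin: "finite R" and sub: "{0..2 * int s} \<subseteq> R"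
  shows "(\<Sum>k\<in>R. rf k * rf (r - k) * rf (k - mu) * rf (int s + mu - k - r))
       = fact s * rf r * rf (int s - r) * rf (int s + mu - r) * rf (r - mu)"
proof (cases "0 \<le> r \<and> r \<le> int s")
  case True
  define A where "A = nat r"
  define B where "B = s - A"
  define N where "N = int s + mu - r"
  have eA: "int A = r" using True by (simp add: A_def)
  have eB: "int B = int s - r" using True unfolding B_def A_def by (simp add: of_nat_diff nat_le_iff)
  have eAB: "A + B = s" using True unfolding B_def A_def by (simp add: nat_le_iff)
  have subN: "{0..N} \<subseteq> R"
  proof
    fix x assume "x \<in> {0..N}"
    then have "x \<in> {0..2 * int s}" using True ms by (auto simp: N_def)
    then show "x \<in> R" using sub by blast
  qed
  have V: "(\<Sum>k\<in>R. rf k * rf (int A - k) * rf (N - k) * rf (int B - N + k))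
       = fact (A + B) / (fact A * fact B) * rf N * rf (int (A + B) - N)"
    by (rule vandermonde_rf[OF fin subN])
  have "(\<Sum>k\<in>R. rf k * rf (r - k) * rf (k - mu) * rf (int s + mu - k - r))
      = (\<Sum>k\<in>R. rf k * rf (int A - k) * rf (N - k) * rf (int B - N + k))"
  proof (intro sum.cong refl)
    fix k
    have 1: "int B - N + k = k - mu" using eB by (simp add: N_def)
    have 2: "N - k = int s + mu - k - r" by (simp add: N_def)
    show "rf k * rf (r - k) * rf (k - mu) * rf (int s + mu - k - r) = rf k * rf (int A - k) * rf (N - k) * rf (int B - N + k)"
      unfolding 1 2 eA by (simp add: ac_simps)
  qed
  also have "\<dots> = fact (A + B) / (fact A * fact B) * rf N * rf (int (A + B) - N)" by (rule V)
  also have "\<dots> = fact s * rf r * rf (int s - r) * rf (int s + mu - r) * rf (r - mu)"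
  proof -
    have 3: "int (A + B) - N = r - mu" using eAB by (simp add: N_def)
    have 4: "fact (A + B) / (fact A * fact B) = fact s * rf r * rf (int s - r)"
      using eAB eA eB by (metis rf_of_nat times_divide_eq_right divide_divide_eq_left mult.right_neutral mult_1)
    show ?thesis unfolding 3 4 by (simp add: N_def)
  qed
  finally show ?thesis .
next
  case False
  have z: "rf k * rf (r - k) * rf (k - mu) * rf (int s + mu - k - r) = 0" for k
  proof (cases "r < 0")
    case True then show ?thesis by (cases "k < 0") auto
  next
    case False2: False
    then have "r > int s" using False by auto
    then show ?thesis by (cases "k - mu < 0") auto
  qed
  have "rf r * rf (int s - r) = 0" using False by auto
  then show ?thesis using z by (simp add: sum.neutral)
qed



lemma sum_nat_int: "(\<Sum>q\<le>c. F (int q)) = (\<Sum>x\<in>{0..int c}. F x)"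
proof -
  have "{0..int c} = int ` {..c}" by (auto simp: image_iff intro!: bexI[of _ "nat _"])
  then show ?thesis by (simp add: sum.reindex)
qed

lemma sg_even: "even (x - y) \<Longrightarrow> sg x = sg y"
  by (auto simp: sg_def)

lemma sg_abs: "(-1::real) ^ nat \<bar>x\<bar> = sg x"
  by (simp add: sg_def even_nat_iff)

lemma alg2:
  fixes a il g p fs ik im fc sc tb fns S :: real
  assumes "p * tb = 1" "fc \<noteq> 0" "ik \<noteq> 0" "im \<noteq> 0"
  shows "a * (il * g * p * fs / (ik * im * fc)) * (sc * (tb * fc * fns * S)) = a * il * fs * sc * fns * (g * (1 / ik) * (1 / im) * S)"
proof -
  have "a * (il * g * p * fs / (ik * im * fc)) * (sc * (tb * fc * fns * S)) = a * il * g * (p * tb) * fs * sc * fns * S * (fc / fc) / (ik * im)"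
    by (simp add: field_simps)
  also have "\<dots> = a * il * g * fs * sc * fns * S / (ik * im)" using assms by simp
  finally show ?thesis by (simp add: field_simps)
qed

lemma powr_cancel:
  fixes k mu :: int
  assumes "0 \<le> k" "mu \<le> k"
  shows "2 powr real_of_int (mu - 2 * k) * 2 ^ (nat (k - mu) + nat k) = (1::real)"
proof -
  have "(2::real) ^ (nat (k - mu) + nat k) = 2 powr real (nat (k - mu) + nat k)"
    by (rule powr_realpow[symmetric]) simp
  also have "real (nat (k - mu) + nat k) = real_of_int (2 * k - mu)" using assms by simp
  finally have "(2::real) ^ (nat (k - mu) + nat k) = 2 powr real_of_int (2 * k - mu)" .
  then show ?thesis by (simp add: powr_add[symmetric])
qed



lemma main_real:
  fixes n s :: nat and mu :: int and j j' :: nat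
  assumes n1: "1 \<le> n" and sn: "s \<le> n" and ms: "\<bar>mu\<bar> \<le> int s" and jn: "j \<le> n" and jn': "j' \<le> n"
    and jj: "int j = int j' + mu"
  shows "(-1) ^ (n - j') * clebsch_gordan (2 * int s) (2 * mu) (int n) (2 * int j - int n) (int n) (int n - 2 * int j')
     = (\<Sum>k\<in>{k. max 0 mu \<le> k \<and> 2 * k \<le> int s + mu}. A_coef n s mu k *
          (1 / sqrt (real (n choose j)) * (1 / sqrt (real (n choose j')))
           * Fr (n - s) (nat (k - mu)) (nat (int s + mu - 2 * k)) (nat k) (int j) (int j')))"
proof -
  define M where "M = 3 * int n + 3"
  define R where "R = {-M..M}"
  define K where "K = {k. max 0 mu \<le> k \<and> 2 * k \<le> int s + mu}"
  define h where "h = (\<lambda>k r. sg (int s + mu - r) * (rf k * rf (r - k) * rf (k - mu) * rf (int s + mu - k - r))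
                        * (rf (int j - r) * rf (int n - int s - int j + r)))"
  define w where "w = (\<lambda>r. sg (int s + mu - r) * (rf r * rf (int s - r) * rf (int s + mu - r) * rf (r - mu))
                        * (rf (int j - r) * rf (int n - int s - int j + r)))"
  define sc where "sc = 1 / sqrt (real (n choose j)) * (1 / sqrt (real (n choose j')))"
  define Cst where "Cst = sqrt (ifact (int s + mu) * ifact (int s - mu) / fact (2 * s)) * inverse (l_coef n s) * fact s"
  have finR: "finite R" by (simp add: R_def)
  have KR: "K \<subseteq> R" using ms sn by (auto simp: K_def R_def M_def)
  have finK: "finite K" using finite_subset[OF KR finR] .

  have E2: "(\<Sum>k\<in>K. \<Sum>r\<in>R. h k r) = fact s * (\<Sum>r\<in>R. w r)"
  proof -
    have z: "h k r = 0" if "k \<in> R - K" for k r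
    proof -
      have "k < 0 \<or> k < mu \<or> 2 * k > int s + mu" using that by (auto simp: K_def)
      then show ?thesis
      proof (elim disjE)
        assume "k < 0" then show ?thesis by (simp add: h_def)
      next
        assume "k < mu" then show ?thesis by (simp add: h_def)
      next
        assume a: "2 * k > int s + mu"
        show ?thesis
        proof (cases "r - k < 0")
          case True then show ?thesis by (simp add: h_def)
        next
          case False
          then have "int s + mu - k - r < 0" using a by linarith
          then show ?thesis by (simp add: h_def)
        qed
      qed
    qed
    have "(\<Sum>k\<in>K. \<Sum>r\<in>R. h k r) = (\<Sum>k\<in>R. \<Sum>r\<in>R. h k r)"
      by (rule sum.mono_neutral_left[OF finR KR]) (simp add: z)
    also have "\<dots> = (\<Sum>r\<in>R. \<Sum>k\<in>R. h k r)" by (rule sum.swap)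
    also have "\<dots> = (\<Sum>r\<in>R. fact s * w r)"
    proof (intro sum.cong refl)
      fix r
      have sub: "{0..2 * int s} \<subseteq> R" using sn by (auto simp: R_def M_def)
      have "(\<Sum>k\<in>R. h k r) = sg (int s + mu - r) * (\<Sum>k\<in>R. rf k * rf (r - k) * rf (k - mu) * rf (int s + mu - k - r))
                        * (rf (int j - r) * rf (int n - int s - int j + r))"
        unfolding h_def by (simp add: sum_distrib_left sum_distrib_right)
      also have "\<dots> = fact s * w r" unfolding inner_k[OF ms finR sub] w_def by (simp add: ac_simps)
      finally show "(\<Sum>k\<in>R. h k r) = fact s * w r" .
    qed
    also have "\<dots> = fact s * (\<Sum>r\<in>R. w r)" by (simp add: sum_distrib_left)
    finally show ?thesis .
  qed

  define T where "T = (\<Sum>t\<in>{0..int n - int s}. sg t * rf t * rf (int n - int s - t) * rf (int n - int j - t) * rf (int n - int j' - t)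
       * rf (int s - int n + int j + t) * rf (int s - int n + int j' + t))"
  have E3: "(-1) ^ (n - j') * T = (\<Sum>r\<in>R. w r)"
  proof -
    define f where "f = (\<lambda>t. sg t * rf t * rf (int n - int s - t) * rf (int n - int j - t) * rf (int n - int j' - t)
       * rf (int s - int n + int j + t) * rf (int s - int n + int j' + t))"
    have fz: "f x = 0" if "x \<notin> {0..int n - int s}" for x
      using that by (cases "x < 0") (auto simp: f_def)
    have subR: "{0 + (int s - int n + int j)..(int n - int s) + (int s - int n + int j)} \<subseteq> R"
      using jn sn by (auto simp: R_def M_def)
    have "T = (\<Sum>r\<in>R. f (r - (int s - int n + int j)))"
      unfolding T_def f_def[symmetric] by (rule sum_shift_R[OF fz subR finR])
    moreover have "(-1) ^ (n - j') * f (r - (int s - int n + int j)) = w r" for r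
    proof -
      have s1: "(-1::real) ^ (n - j') = sg (int n - int j')" using sg_nat[of "n - j'"] jn' by (simp add: of_nat_diff)
      have s2: "sg (int n - int j') * sg (r - (int s - int n + int j)) = sg (int s + mu - r)"
        unfolding sg_add[symmetric] by (rule sg_even) (use jj in presburger)
      have a1: "int n - int s - (r - (int s - int n + int j)) = int j - r" by simp
      have a2: "int n - int j - (r - (int s - int n + int j)) = int s - r" by simp
      have a3: "int n - int j' - (r - (int s - int n + int j)) = int s + mu - r" using jj by simp
      have a4: "int s - int n + int j + (r - (int s - int n + int j)) = r" by simp
      have a5: "int s - int n + int j' + (r - (int s - int n + int j)) = r - mu" using jj by simp
      have a6: "r - (int s - int n + int j) = int n - int s - int j + r" by simp
      have "(-1) ^ (n - j') * f (r - (int s - int n + int j))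
         = (sg (int n - int j') * sg (r - (int s - int n + int j))) * rf (r - (int s - int n + int j)) *
            rf (int n - int s - (r - (int s - int n + int j))) * rf (int n - int j - (r - (int s - int n + int j))) *
            rf (int n - int j' - (r - (int s - int n + int j))) * rf (int s - int n + int j + (r - (int s - int n + int j))) *
            rf (int s - int n + int j' + (r - (int s - int n + int j)))"
        unfolding f_def s1 by (simp only: ac_simps)
      also have "\<dots> = w r" unfolding s2 a1 a2 a3 a4 a5 unfolding a6 w_def by (simp only: ac_simps)
      finally show ?thesis .
    qed
    ultimately show ?thesis by (simp add: sum_distrib_left)
  qed

  have E4: "sqrt (real_of_int (2 * int s + 1) * ifact (int s) * ifact (int s) * ifact (int n - int s) / ifact (int n + int s + 1))
        * sqrt (ifact (int s + mu) * ifact (int s - mu) * ifact (int n - int j) * ifact (int j) * ifact (int j') * ifact (int n - int j'))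
        = Cst * sc * fact (n - s) * fact s"
  proof -
    have i1: "ifact (int s) = fact s" by (simp add: ifact_def)
    have i2: "ifact (int n - int s) = fact (n - s)" using sn by (simp add: ifact_def nat_diff_distrib)
    have i3: "ifact (int n + int s + 1) = fact (n + s + 1)" by (simp add: ifact_def nat_add_distrib)
    have i4: "ifact (int n - int j) = fact (n - j)" using jn by (simp add: ifact_def nat_diff_distrib)
    have i5: "ifact (int n - int j') = fact (n - j')" using jn' by (simp add: ifact_def nat_diff_distrib)
    have i6: "ifact (int j) = fact j" "ifact (int j') = fact j'" by (simp_all add: ifact_def)
    have r1: "real_of_int (2 * int s + 1) = real (2 * s + 1)" by simp
    have X0: "ifact (int s + mu) * ifact (int s - mu) \<ge> 0" by (simp add: ifact_def)
    have f2: "fact (2 * s + 1) = real (2 * s + 1) * fact (2 * s)" by (simp add: algebra_simps)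
    have c1: "real (n choose j) = fact n / (fact j * fact (n - j))" using binomial_fact[OF jn] by simp
    have c2: "real (n choose j') = fact n / (fact j' * fact (n - j'))" using binomial_fact[OF jn'] by simp
    show ?thesis
      unfolding i1 i2 i3 i4 i5 i6 r1 Cst_def sc_def l_coef_def
      by (rule alg[OF _ _ _ _ _ _ _ _ _ X0 _ f2 c1 c2]) simp_all
  qed

  have E1: "A_coef n s mu k * (sc * Fr (n - s) (nat (k - mu)) (nat (int s + mu - 2 * k)) (nat k) (int j) (int j'))
          = Cst * sc * fact (n - s) * (\<Sum>r\<in>R. h k r)" if kK: "k \<in> K" for k
  proof -
    have k0: "0 \<le> k" and kmu: "mu \<le> k" and k2: "2 * k \<le> int s + mu" using kK by (auto simp: K_def)
    define c where "c = nat (int s + mu - 2 * k)"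
    have ce: "int c = int s + mu - 2 * k" using k2 by (simp add: c_def)
    define G0 where "G0 = (\<lambda>x. rf x * rf (int c - x) * sg (int c - x) * rf (int j - k - x) * rf (int n - int s - int j + k + x))"
    have Fr_eq: "Fr (n - s) (nat (k - mu)) c (nat k) (int j) (int j')
        = 2 ^ (nat (k - mu) + nat k) * fact c * fact (n - s) * (\<Sum>q\<le>c. G0 (int q))"
    proof -
      have cond: "int j - int (nat k) = int j' - int (nat (k - mu))" using jj k0 kmu by simp
      have "Fr (n - s) (nat (k - mu)) c (nat k) (int j) (int j') = 2 ^ (nat (k - mu) + nat k) *
          (\<Sum>q\<le>c. fact c * rf (int q) * rf (int c - int q) * sg (int c - int q) * fact (n - s)
          * rf (int j - int (nat k) - int q) * rf (int (n - s) - int j + int (nat k) + int q))"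
        unfolding Fr_def using cond by simp
      also have "\<dots> = 2 ^ (nat (k - mu) + nat k) * (\<Sum>q\<le>c. fact c * fact (n - s) * G0 (int q))"
        unfolding G0_def using k0 sn by (simp add: of_nat_diff ac_simps)
      finally show ?thesis by (simp only: sum_distrib_left[symmetric] mult.assoc)
    qed
    have shift: "(\<Sum>r\<in>R. h k r) = sg k * rf k * rf (k - mu) * (\<Sum>q\<le>c. G0 (int q))"
    proof -
      have G0z: "G0 x = 0" if "x \<notin> {0..int c}" for x
        using that by (cases "x < 0") (auto simp: G0_def)
      have subR: "{0 + k..int c + k} \<subseteq> R" using k0 ce ms sn by (auto simp: R_def M_def)
      have "(\<Sum>q\<le>c. G0 (int q)) = (\<Sum>r\<in>R. G0 (r - k))"
        unfolding sum_nat_int by (rule sum_shift_R[OF G0z subR finR])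
      moreover have "sg k * rf k * rf (k - mu) * G0 (r - k) = h k r" for r
      proof -
        have a1: "int c - (r - k) = int s + mu - k - r" using ce by simp
        have a2: "int j - k - (r - k) = int j - r" by simp
        have a3: "int n - int s - int j + k + (r - k) = int n - int s - int j + r" by simp
        have s1: "sg k * sg (int s + mu - k - r) = sg (int s + mu - r)"
          unfolding sg_add[symmetric] by (simp add: algebra_simps)
        have "sg k * rf k * rf (k - mu) * G0 (r - k) = (sg k * sg (int s + mu - k - r)) * (rf k * rf (r - k) * rf (k - mu) * rf (int s + mu - k - r))
                        * (rf (int j - r) * rf (int n - int s - int j + r))"
          unfolding G0_def a1 a2 a3 by (simp only: ac_simps)
        also have "\<dots> = h k r" unfolding s1 h_def by simp
        finally show ?thesis .
      qed
      ultimately show ?thesis by (simp add: sum_distrib_left)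
    qed
    have Aeq: "A_coef n s mu k = sqrt (ifact (int s + mu) * ifact (int s - mu) / fact (2 * s))
        * (inverse (l_coef n s) * sg k * 2 powr real_of_int (mu - 2 * k) * fact s
        / (ifact k * ifact (k - mu) * fact c))"
      unfolding A_coef_def sg_abs using k2 by (simp add: ifact_def c_def)
    have rk: "rf k = 1 / ifact k" using k0 by (simp add: rf_ifact)
    have rkm: "rf (k - mu) = 1 / ifact (k - mu)" using kmu by (simp add: rf_ifact)
    have nz: "ifact k \<noteq> 0" "ifact (k - mu) \<noteq> 0" "fact c \<noteq> (0::real)" by (simp_all add: ifact_def)
    show ?thesis
      unfolding Aeq c_def[symmetric] Fr_eq shift rk rkm Cst_def
      by (rule alg2[OF powr_cancel[OF k0 kmu] nz(3) nz(1) nz(2)])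
  qed

  have "(-1) ^ (n - j') * clebsch_gordan (2 * int s) (2 * mu) (int n) (2 * int j - int n) (int n) (int n - 2 * int j')
      = (-1) ^ (n - j') * (Cst * sc * fact (n - s) * fact s * T)"
    unfolding CG_eval[OF jn jn' sn ms jj] E4[symmetric] T_def by simp
  also have "\<dots> = Cst * sc * fact (n - s) * (fact s * ((-1) ^ (n - j') * T))" by (simp only: ac_simps)
  also have "\<dots> = Cst * sc * fact (n - s) * (\<Sum>k\<in>K. \<Sum>r\<in>R. h k r)" unfolding E3 E2 ..
  also have "\<dots> = (\<Sum>k\<in>K. Cst * sc * fact (n - s) * (\<Sum>r\<in>R. h k r))" by (simp add: sum_distrib_left)
  also have "\<dots> = (\<Sum>k\<in>K. A_coef n s mu k * (sc * Fr (n - s) (nat (k - mu)) (nat (int s + mu - 2 * k)) (nat k) (int j) (int j')))"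
    by (intro sum.cong refl) (rule E1[symmetric])
  finally show ?thesis unfolding K_def sc_def by (simp only: ac_simps)
qed



theorem mainTheorem5:
  fixes n \<sigma> :: nat and \<mu> :: int
  assumes "1 \<le> n" and "\<sigma> \<le> n" and "\<bar>\<mu>\<bar> \<le> int \<sigma>"
  shows "\<forall>j\<le>n. \<forall>j'\<le>n.
    tensor_op n \<sigma> \<mu> j j' =
      (\<Sum>k | max 0 \<mu> \<le> k \<and> 2 * k \<le> int \<sigma> + \<mu>.
         complex_of_real (A_coef n \<sigma> \<mu> k) *
         S_op (n - \<sigma>, nat (k - \<mu>), nat (int \<sigma> + \<mu> - 2 * k), nat k) j j')"
proof (intro allI impI)
  fix j j' assume jn: "j \<le> n" and jn': "j' \<le> n"
  define K where "K = {k. max 0 \<mu> \<le> k \<and> 2 * k \<le> int \<sigma> + \<mu>}"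
  define sc where "sc = 1 / sqrt (real (n choose j)) * (1 / sqrt (real (n choose j')))"
  have Sk: "S_op (n - \<sigma>, nat (k - \<mu>), nat (int \<sigma> + \<mu> - 2 * k), nat k) j j'
      = complex_of_real (sc * Fr (n - \<sigma>) (nat (k - \<mu>)) (nat (int \<sigma> + \<mu> - 2 * k)) (nat k) (int j) (int j'))"
    if "k \<in> K" for k
  proof -
    have N: "(n - \<sigma>) + nat (k - \<mu>) + nat (int \<sigma> + \<mu> - 2 * k) + nat k = n"
      using that assms by (auto simp: K_def)
    show ?thesis unfolding S_op_eq N sc_def by simp
  qed
  have "(\<Sum>k\<in>K. complex_of_real (A_coef n \<sigma> \<mu> k) *
         S_op (n - \<sigma>, nat (k - \<mu>), nat (int \<sigma> + \<mu> - 2 * k), nat k) j j')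
     = (\<Sum>k\<in>K. complex_of_real (A_coef n \<sigma> \<mu> k *
         (sc * Fr (n - \<sigma>) (nat (k - \<mu>)) (nat (int \<sigma> + \<mu> - 2 * k)) (nat k) (int j) (int j'))))"
    by (intro sum.cong refl) (simp add: Sk)
  also have "\<dots> = complex_of_real (\<Sum>k\<in>K. A_coef n \<sigma> \<mu> k *
         (sc * Fr (n - \<sigma>) (nat (k - \<mu>)) (nat (int \<sigma> + \<mu> - 2 * k)) (nat k) (int j) (int j')))"
    by (simp only: of_real_sum)
  finally have rhs: "(\<Sum>k\<in>K. complex_of_real (A_coef n \<sigma> \<mu> k) *
         S_op (n - \<sigma>, nat (k - \<mu>), nat (int \<sigma> + \<mu> - 2 * k), nat k) j j') = \<dots>" .
  have "(-1) ^ (n - j') * clebsch_gordan (2 * int \<sigma>) (2 * \<mu>) (int n) (2 * int j - int n) (int n) (int n - 2 * int j')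
     = (\<Sum>k\<in>K. A_coef n \<sigma> \<mu> k *
         (sc * Fr (n - \<sigma>) (nat (k - \<mu>)) (nat (int \<sigma> + \<mu> - 2 * k)) (nat k) (int j) (int j')))"
  proof (cases "int j = int j' + \<mu>")
    case True
    show ?thesis unfolding K_def sc_def by (rule main_real[OF assms jn jn' True])
  next
    case False
    have ne: "\<not> (2 * \<mu> = (2 * int j - int n) + (int n - 2 * int j'))" using False by linarith
    have "clebsch_gordan (2 * int \<sigma>) (2 * \<mu>) (int n) (2 * int j - int n) (int n) (int n - 2 * int j') = 0"
      unfolding clebsch_gordan_def using ne by simp
    moreover have "Fr (n - \<sigma>) (nat (k - \<mu>)) (nat (int \<sigma> + \<mu> - 2 * k)) (nat k) (int j) (int j') = 0" if "k \<in> K" for k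
      using that False by (auto simp: K_def Fr_def)
    ultimately show ?thesis by simp
  qed
  then show "tensor_op n \<sigma> \<mu> j j' =
      (\<Sum>k | max 0 \<mu> \<le> k \<and> 2 * k \<le> int \<sigma> + \<mu>.
         complex_of_real (A_coef n \<sigma> \<mu> k) *
         S_op (n - \<sigma>, nat (k - \<mu>), nat (int \<sigma> + \<mu> - 2 * k), nat k) j j')"
    unfolding K_def[symmetric] rhs tensor_op_def by simp
qed

end
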